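(* Let $\mathscr H$ and $\mathscr F$ be RKHSs on sets $\mathcal X$ and $\mathcal Y$ with feature maps $\phi$ and $\psi$, let $\Phi=[\phi(x_1),\dots,\phi(x_m)]$ and $\Psi=[\psi(y_1),\dots,\psi(y_n)]$ each consist of linearly independent elements, let $B\in\mathbb R^{n\times m}$, and let $S=\Psi B\Phi^\top\colon\mathscr H\to\mathscr F$. Let $G_\Phi=\Phi^\top\Phi$, $G_\Psi=\Psi^\top\Psi$ and $M=B^\top G_\Psi B\in\mathbb R^{m\times m}$. Assume that each singular value of $S$ has multiplicity $1$. Let $\lambda_1,\dots,\lambda_r$ be the nonzero eigenvalues of $MG_\Phi\in\mathbb R^{m\times m}$, counted with multiplicities, with corresponding eigenvectors $\mathbf w_1,\dots,\mathbf w_r\in\mathbb R^m$, and set $$v_i=(\mathbf w_i^\top G_\Phi\mathbf w_i)^{-1/2}\,\Phi\mathbf w_i,\qquad u_i=\lambda_i^{-1/2}Sv_i.$$ Then the singular value decomposition of $S$ is $$S=\sum_{i=1}^r\lambda_i^{1/2}\,(u_i\otimes v_i).$$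
   Context: An RKHS $\mathscr H$ on $\mathcal X$ with kernel $k$ has feature map $\phi(x)=k(x,\cdot)$ (similarly $\mathscr F$ with kernel $l$, feature map $\psi$). Feature matrices are row vectors: $\Phi\mathbf a=\sum_j a_j\phi(x_j)$ for $\mathbf a\in\mathbb R^m$; $\Phi^\top v=(\langle\phi(x_j),v\rangle_{\mathscr H})_j$ for $v\in\mathscr H$; $G_\Phi=(k(x_i,x_j))_{ij}$ and $G_\Psi=(l(y_i,y_j))_{ij}$ are the Gram matrices. Thus $Sv=\sum_i\psi(y_i)\sum_jb_{ij}\langle\phi(x_j),v\rangle$. The tensor product operator is $(y\otimes x)h=\langle x,h\rangle y$; a singular value decomposition $\sum_i\sigma_i(u_i\otimes v_i)$ has orthonormal systems $\{u_i\}\subseteq\mathscr F$, $\{v_i\}\subseteq\mathscr H$ and $\sigma_i>0$. *)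

theory Defs
  imports "HOL-Analysis.Inner_Product" "Jordan_Normal_Form.Char_Poly"
begin

text \<open>An RKHS on a set 'x is modelled as a real Hilbert space 'h together with its
 feature map phi; the reproducing kernel is k x x' = inner (phi x) (phi x').
 The RKHS property (elements of 'h are identified with the functions
 x |-> inner h (phi x)) says that this identification is injective.\<close>
definition rkhs_feature :: "('x \<Rightarrow> 'h::{real_inner,complete_space}) \<Rightarrow> bool" where
  "rkhs_feature phi \<longleftrightarrow> (\<forall>h. (\<forall>x. inner h (phi x) = 0) \<longrightarrow> h = 0)"

definition lin_indep_family :: "('x \<Rightarrow> 'h::real_vector) \<Rightarrow> (nat \<Rightarrow> 'x) \<Rightarrow> nat \<Rightarrow> bool" where
  "lin_indep_family phi x m \<longleftrightarrow>
     (\<forall>a. (\<Sum>j<m. a j *\<^sub>R phi (x j)) = 0 \<longrightarrow> (\<forall>j<m. a j = 0))"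

definition gram :: "('x \<Rightarrow> 'h::real_inner) \<Rightarrow> (nat \<Rightarrow> 'x) \<Rightarrow> nat \<Rightarrow> real mat" where
  "gram phi x m = mat m m (\<lambda>(i,j). inner (phi (x i)) (phi (x j)))"

definition feat_comb :: "('x \<Rightarrow> 'h::real_vector) \<Rightarrow> (nat \<Rightarrow> 'x) \<Rightarrow> nat \<Rightarrow> real vec \<Rightarrow> 'h" where
  "feat_comb phi x m a = (\<Sum>j<m. (a $ j) *\<^sub>R phi (x j))"

text \<open>S = Psi B Phi^T, i.e. S v = sum_i psi(y_i) sum_j b_ij inner (phi x_j) v.\<close>
definition op_S :: "('x \<Rightarrow> 'h::real_inner) \<Rightarrow> (nat \<Rightarrow> 'x) \<Rightarrow> nat \<Rightarrow>
                    ('y \<Rightarrow> 'f::real_inner) \<Rightarrow> (nat \<Rightarrow> 'y) \<Rightarrow> nat \<Rightarrow> real mat \<Rightarrow> 'h \<Rightarrow> 'f" where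
  "op_S phi x m psi y n B v =
     (\<Sum>i<n. (\<Sum>j<m. B $$ (i,j) * inner (phi (x j)) v) *\<^sub>R psi (y i))"

definition tensor_op :: "'f::real_vector \<Rightarrow> 'h::real_inner \<Rightarrow> 'h \<Rightarrow> 'f" where
  "tensor_op u v h = inner v h *\<^sub>R u"

text \<open>For sigma > 0: the space {v. S^* S v = sigma^2 v}, written without naming the
 adjoint: S^* S v = sigma^2 v iff inner (S h) (S v) = sigma^2 inner h v for all h.
 sigma is a singular value of S iff this space is nonzero, and its multiplicity
 is the dimension of this space.\<close>
definition sv_space :: "('h::real_inner \<Rightarrow> 'f::real_inner) \<Rightarrow> real \<Rightarrow> 'h set" where
  "sv_space S \<sigma> = {v. \<forall>h. inner (S h) (S v) = \<sigma>\<^sup>2 * inner h v}"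

definition singular_value :: "('h::real_inner \<Rightarrow> 'f::real_inner) \<Rightarrow> real \<Rightarrow> bool" where
  "singular_value S \<sigma> \<longleftrightarrow> \<sigma> > 0 \<and> sv_space S \<sigma> \<noteq> {0}"

definition sv_multiplicity :: "('h::real_inner \<Rightarrow> 'f::real_inner) \<Rightarrow> real \<Rightarrow> nat" where
  "sv_multiplicity S \<sigma> = dim (sv_space S \<sigma>)"

end

theory Submission
  imports Defs "Jordan_Normal_Form.Jordan_Normal_Form_Uniqueness" "Jordan_Normal_Form.Jordan_Normal_Form_Existence"
begin


definition cv :: "('x \<Rightarrow> 'h::real_inner) \<Rightarrow> (nat \<Rightarrow> 'x) \<Rightarrow> nat \<Rightarrow> 'h \<Rightarrow> real vec" where
  "cv phi x m h = vec m (\<lambda>j. inner (phi (x j)) h)"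

lemma cv_carrier[simp]: "cv phi x m h \<in> carrier_vec m" by (simp add: cv_def)
lemma cv_index[simp]: "j < m \<Longrightarrow> cv phi x m h $ j = inner (phi (x j)) h" by (simp add: cv_def)
lemma cv_dim[simp]: "dim_vec (cv phi x m h) = m" by (simp add: cv_def)

lemma gram_carrier[simp]: "gram phi x m \<in> carrier_mat m m" by (simp add: gram_def)
lemma gram_dims[simp]: "dim_row (gram phi x m) = m" "dim_col (gram phi x m) = m" by (simp_all add: gram_def)
lemma gram_index[simp]: "i < m \<Longrightarrow> j < m \<Longrightarrow> gram phi x m $$ (i,j) = inner (phi (x i)) (phi (x j))"
  by (simp add: gram_def)

lemma sp_sum: "dim_vec b = m \<Longrightarrow> a \<bullet> b = (\<Sum>j<m. a $ j * b $ j)"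
  by (simp add: scalar_prod_def atLeast0LessThan)

lemma mv_index: "A \<in> carrier_mat k m \<Longrightarrow> a \<in> carrier_vec m \<Longrightarrow> i < k \<Longrightarrow>
   (A *\<^sub>v a) $ i = (\<Sum>j<m. A $$ (i,j) * a $ j)"
  by (auto simp: scalar_prod_def atLeast0LessThan intro!: sum.cong)

lemma gram_mv: "a \<in> carrier_vec m \<Longrightarrow> i < m \<Longrightarrow>
   (gram phi x m *\<^sub>v a) $ i = (\<Sum>j<m. inner (phi (x i)) (phi (x j)) * a $ j)"
  by (simp add: mv_index[OF gram_carrier] del: index_mult_mat_vec)

lemma fc_inner_h: "a \<in> carrier_vec m \<Longrightarrow> inner (feat_comb phi x m a) h = a \<bullet> cv phi x m h"
  by (simp add: feat_comb_def inner_sum_left sp_sum)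

lemma fc_inner_h2: "a \<in> carrier_vec m \<Longrightarrow> inner h (feat_comb phi x m a) = a \<bullet> cv phi x m h"
  by (simp add: fc_inner_h inner_commute[of h])

lemma cv_fc: "a \<in> carrier_vec m \<Longrightarrow> cv phi x m (feat_comb phi x m a) = gram phi x m *\<^sub>v a"
  by (intro eq_vecI, simp_all add: gram_mv feat_comb_def inner_sum_right mult.commute del: index_mult_mat_vec)

lemma fc_inner: "a \<in> carrier_vec m \<Longrightarrow> b \<in> carrier_vec m \<Longrightarrow>
  inner (feat_comb phi x m a) (feat_comb phi x m b) = a \<bullet> (gram phi x m *\<^sub>v b)"
  by (simp add: fc_inner_h cv_fc)

lemma gram_sym: "a \<in> carrier_vec m \<Longrightarrow> b \<in> carrier_vec m \<Longrightarrow>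
  a \<bullet> (gram phi x m *\<^sub>v b) = b \<bullet> (gram phi x m *\<^sub>v a)"
  by (metis fc_inner inner_commute)

lemma fc_add: "a \<in> carrier_vec m \<Longrightarrow> b \<in> carrier_vec m \<Longrightarrow>
  feat_comb phi x m (a + b) = feat_comb phi x m a + feat_comb phi x m b"
  by (simp add: feat_comb_def scaleR_add_left sum.distrib)
lemma fc_diff: "a \<in> carrier_vec m \<Longrightarrow> b \<in> carrier_vec m \<Longrightarrow>
  feat_comb phi x m (a - b) = feat_comb phi x m a - feat_comb phi x m b"
  by (simp add: feat_comb_def scaleR_diff_left sum_subtractf)
lemma fc_smult: "a \<in> carrier_vec m \<Longrightarrow>
  feat_comb phi x m (c \<cdot>\<^sub>v a) = c *\<^sub>R feat_comb phi x m a"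
  by (simp add: feat_comb_def scaleR_sum_right)
lemma fc_zero: "feat_comb phi x m (0\<^sub>v m) = 0"
  by (simp add: feat_comb_def)

lemma fc_inj: "lin_indep_family phi x m \<Longrightarrow> a \<in> carrier_vec m \<Longrightarrow> feat_comb phi x m a = 0 \<Longrightarrow> a = 0\<^sub>v m"
  unfolding lin_indep_family_def feat_comb_def
  by (intro eq_vecI, auto)

lemma fc_pos: "lin_indep_family phi x m \<Longrightarrow> a \<in> carrier_vec m \<Longrightarrow> a \<noteq> 0\<^sub>v m \<Longrightarrow>
   a \<bullet> (gram phi x m *\<^sub>v a) > 0"
  by (metis fc_inner fc_inj inner_gt_zero_iff)

lemma opS_eq: "B \<in> carrier_mat n m \<Longrightarrow>
  op_S phi x m psi y n B h = feat_comb psi y n (B *\<^sub>v cv phi x m h)"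
  by (simp add: op_S_def feat_comb_def mv_index del: index_mult_mat_vec)

lemma opS_scale: "op_S phi x m psi y n B (c *\<^sub>R h) = c *\<^sub>R op_S phi x m psi y n B h"
  by (simp add: op_S_def scaleR_sum_right sum_distrib_left mult.left_commute)



lemma gram_transpose[simp]: "transpose_mat (gram phi x m) = gram phi x m"
  by (intro eq_matI, auto simp: inner_commute)

lemma gram_left: "a \<in> carrier_vec m \<Longrightarrow> b \<in> carrier_vec m \<Longrightarrow>
  (gram phi x m *\<^sub>v a) \<bullet> b = a \<bullet> (gram phi x m *\<^sub>v b)"
  using transpose_vec_mult_scalar[OF gram_carrier, of b m a phi x] by simp

lemma sum_min_le: "sum_list (map (min (1::nat)) L) \<le> sum_list (map (min 2) L)"
  by (induct L) auto
lemma sum_min_eq: "sum_list (map (min 2) L) = sum_list (map (min (1::nat)) L) \<Longrightarrow> \<forall>n\<in>set L. n \<le> 1"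
proof (induct L)
  case (Cons a L)
  have "sum_list (map (min (1::nat)) L) \<le> sum_list (map (min 2) L)" by (rule sum_min_le)
  with Cons.prems have "min 2 a = min 1 a" "sum_list (map (min 2) L) = sum_list (map (min (1::nat)) L)" by auto
  with Cons.hyps show ?case by auto
qed simp

lemma sum_fst_ones: "\<forall>p\<in>set n_as. fst p = (1::nat) \<Longrightarrow> sum_list (map fst n_as) = length n_as"
  by (induct n_as) auto

lemma jm_diag: "\<forall>p\<in>set n_as. fst p = 1 \<Longrightarrow> jordan_matrix (n_as :: (nat \<times> 'a::{zero,one}) list) =
  mat (length n_as) (length n_as) (\<lambda>(i,j). if i = j then snd (n_as ! i) else 0)"
proof (induct n_as)
  case Nil
  show ?case by (intro eq_matI, auto simp: jordan_matrix_def)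
next
  case (Cons p n_as)
  obtain a where p: "p = (1,a)" using Cons.prems by (cases p, auto)
  have IH: "jordan_matrix n_as = mat (length n_as) (length n_as) (\<lambda>(i,j). if i = j then snd (n_as ! i) else 0)"
    using Cons by auto
  have s: "sum_list (map fst n_as) = length n_as" using Cons.prems sum_fst_ones by auto
  show ?case unfolding p jordan_matrix_Cons s IH
    by (intro eq_matI, auto simp: four_block_mat_def jordan_block_def nth_Cons')
qed

lemma sum_fst_filter_ones: "\<forall>p\<in>set xs. fst p = (1::nat) \<Longrightarrow> sum_list (map fst (filter P xs)) = length (filter P xs)"
  by (induct xs) auto

lemma card2_obtain: assumes "2 \<le> card K" obtains k1 k2 where "k1 \<in> K" "k2 \<in> K" "k1 \<noteq> k2"
proof -
  have "finite K" "K \<noteq> {}" using assms by (auto intro: card_ge_0_finite)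
  then obtain k1 where k1: "k1 \<in> K" by blast
  have "card (K - {k1}) \<ge> 1" using assms k1 \<open>finite K\<close> by (simp add: card_Diff_singleton)
  hence "K - {k1} \<noteq> {}" by (metis card.empty not_one_le_zero)
  then obtain k2 where "k2 \<in> K - {k1}" by blast
  with k1 that show ?thesis by blast
qed

theorem proposition3p13:
  fixes \<phi> :: "'x \<Rightarrow> 'h::{real_inner,complete_space}"
    and \<psi> :: "'y \<Rightarrow> 'f::{real_inner,complete_space}"
    and x :: "nat \<Rightarrow> 'x" and y :: "nat \<Rightarrow> 'y" and m n r :: nat
    and B :: "real mat" and lam :: "nat \<Rightarrow> real" and w :: "nat \<Rightarrow> real vec"
  defines "S \<equiv> op_S \<phi> x m \<psi> y n B"
    and "G\<^sub>\<Phi> \<equiv> gram \<phi> x m" and "G\<^sub>\<Psi> \<equiv> gram \<psi> y n"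
  defines "M \<equiv> transpose_mat B * G\<^sub>\<Psi> * B"
  defines "v \<equiv> (\<lambda>i. (1 / sqrt (scalar_prod (w i) (G\<^sub>\<Phi> *\<^sub>v w i))) *\<^sub>R feat_comb \<phi> x m (w i))"
  defines "u \<equiv> (\<lambda>i. (1 / sqrt (lam i)) *\<^sub>R S (v i))"
  assumes rkhs_H: "rkhs_feature \<phi>" and rkhs_F: "rkhs_feature \<psi>"
    and indep_\<Phi>: "lin_indep_family \<phi> x m" and indep_\<Psi>: "lin_indep_family \<psi> y n"
    and B_dim: "B \<in> carrier_mat n m"
    and mult1: "\<And>\<sigma>. singular_value S \<sigma> \<Longrightarrow> sv_multiplicity S \<sigma> = 1"
    and lam_nonzero: "\<And>i. i < r \<Longrightarrow> lam i \<noteq> 0"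
    and lam_eigs: "char_poly (M * G\<^sub>\<Phi>) = monom 1 (m - r) * (\<Prod>i<r. [:- lam i, 1:])"
    and w_eigvec: "\<And>i. i < r \<Longrightarrow> w i \<in> carrier_vec m \<and> w i \<noteq> 0\<^sub>v m \<and>
                          (M * G\<^sub>\<Phi>) *\<^sub>v w i = lam i \<cdot>\<^sub>v w i"
  shows "(\<forall>i<r. lam i > 0)
    \<and> (\<forall>i<r. \<forall>j<r. inner (u i) (u j) = (if i = j then 1 else 0))
    \<and> (\<forall>i<r. \<forall>j<r. inner (v i) (v j) = (if i = j then 1 else 0))
    \<and> S = (\<lambda>h. \<Sum>i<r. sqrt (lam i) *\<^sub>R tensor_op (u i) (v i) h)"
proof -
  define T where "T = M * G\<^sub>\<Phi>"
  define \<Phi> where "\<Phi> = feat_comb \<phi> x m"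
  define \<Psi> where "\<Psi> = feat_comb \<psi> y n"
  define g where "g = (\<lambda>(a::real vec) (b::real vec). a \<bullet> (G\<^sub>\<Phi> *\<^sub>v b))"
  have G: "G\<^sub>\<Phi> \<in> carrier_mat m m" unfolding G\<^sub>\<Phi>_def by simp
  have GP: "G\<^sub>\<Psi> \<in> carrier_mat n n" unfolding G\<^sub>\<Psi>_def by simp
  have Mc: "M \<in> carrier_mat m m" unfolding M_def using B_dim GP by auto
  have Tc: "T \<in> carrier_mat m m" unfolding T_def using Mc G by auto
  have wc: "\<And>i. i < r \<Longrightarrow> w i \<in> carrier_vec m" using w_eigvec by blast
  have wnz: "\<And>i. i < r \<Longrightarrow> w i \<noteq> 0\<^sub>v m" using w_eigvec by blast
  have Tw: "\<And>i. i < r \<Longrightarrow> T *\<^sub>v w i = lam i \<cdot>\<^sub>v w i" using w_eigvec unfolding T_def by blast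
  have S_eq: "\<And>h. S h = \<Psi> (B *\<^sub>v cv \<phi> x m h)"
    unfolding S_def \<Psi>_def by (rule opS_eq[OF B_dim])
  have S_fc: "\<And>(a::real vec). a \<in> carrier_vec m \<Longrightarrow> S (\<Phi> a) = \<Psi> (B *\<^sub>v (G\<^sub>\<Phi> *\<^sub>v a))"
    unfolding S_eq \<Phi>_def G\<^sub>\<Phi>_def by (simp add: cv_fc)
  have K3: "\<And>h (b::real vec). b \<in> carrier_vec m \<Longrightarrow> inner (S h) (S (\<Phi> b)) = cv \<phi> x m h \<bullet> (T *\<^sub>v b)"
  proof -
    fix h and b :: "real vec" assume b: "b \<in> carrier_vec m"
    define c where "c = cv \<phi> x m h"
    have c: "c \<in> carrier_vec m" unfolding c_def by simp
    define z where "z = G\<^sub>\<Psi> *\<^sub>v (B *\<^sub>v (G\<^sub>\<Phi> *\<^sub>v b))"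
    have z: "z \<in> carrier_vec n" unfolding z_def using GP B_dim G b by auto
    have "inner (S h) (S (\<Phi> b)) = inner (\<Psi> (B *\<^sub>v c)) (\<Psi> (B *\<^sub>v (G\<^sub>\<Phi> *\<^sub>v b)))"
      using S_fc[OF b] S_eq[of h] unfolding c_def by simp
    also have "\<dots> = (B *\<^sub>v c) \<bullet> z"
      unfolding \<Psi>_def z_def G\<^sub>\<Psi>_def
      by (rule fc_inner, insert B_dim G b c, auto)
    also have "\<dots> = z \<bullet> (B *\<^sub>v c)"
      by (rule comm_scalar_prod[of _ n], insert B_dim c z, auto)
    also have "\<dots> = (transpose_mat B *\<^sub>v z) \<bullet> c"
      by (rule transpose_vec_mult_scalar[OF B_dim c z, symmetric])
    also have "\<dots> = c \<bullet> (transpose_mat B *\<^sub>v z)"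
      by (rule comm_scalar_prod[of _ m], insert B_dim c z, auto)
    also have "transpose_mat B *\<^sub>v z = T *\<^sub>v b"
    proof -
      have Bt: "transpose_mat B \<in> carrier_mat m n" using B_dim by simp
      have 1: "transpose_mat B * G\<^sub>\<Psi> \<in> carrier_mat m n" using Bt GP by simp
      have 2: "transpose_mat B * G\<^sub>\<Psi> * B \<in> carrier_mat m m" using 1 B_dim by simp
      have "T *\<^sub>v b = (transpose_mat B * G\<^sub>\<Psi> * B) *\<^sub>v (G\<^sub>\<Phi> *\<^sub>v b)"
        unfolding T_def M_def by (rule assoc_mult_mat_vec[OF 2 G b])
      also have "\<dots> = (transpose_mat B * G\<^sub>\<Psi>) *\<^sub>v (B *\<^sub>v (G\<^sub>\<Phi> *\<^sub>v b))"
        by (rule assoc_mult_mat_vec[OF 1 B_dim], insert G b, auto)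
      also have "\<dots> = transpose_mat B *\<^sub>v z"
        unfolding z_def by (rule assoc_mult_mat_vec[OF Bt GP], insert B_dim G b, auto)
      finally show ?thesis by simp
    qed
    finally show "inner (S h) (S (\<Phi> b)) = cv \<phi> x m h \<bullet> (T *\<^sub>v b)" unfolding c_def .
  qed
  have K1: "\<And>(a::real vec) (b::real vec). a \<in> carrier_vec m \<Longrightarrow> b \<in> carrier_vec m \<Longrightarrow>
      inner (S (\<Phi> a)) (S (\<Phi> b)) = g a (T *\<^sub>v b)"
  proof -
    fix a b :: "real vec" assume a: "a \<in> carrier_vec m" and b: "b \<in> carrier_vec m"
    have "inner (S (\<Phi> a)) (S (\<Phi> b)) = (G\<^sub>\<Phi> *\<^sub>v a) \<bullet> (T *\<^sub>v b)"
      unfolding K3[OF b] unfolding \<Phi>_def G\<^sub>\<Phi>_def using a by (simp add: cv_fc)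
    also have "\<dots> = g a (T *\<^sub>v b)" unfolding g_def G\<^sub>\<Phi>_def
      by (rule gram_left, insert a b Tc, auto)
    finally show "inner (S (\<Phi> a)) (S (\<Phi> b)) = g a (T *\<^sub>v b)" .
  qed
  have g_inner: "\<And>(a::real vec) (b::real vec). a \<in> carrier_vec m \<Longrightarrow> b \<in> carrier_vec m \<Longrightarrow> inner (\<Phi> a) (\<Phi> b) = g a b"
    unfolding g_def \<Phi>_def G\<^sub>\<Phi>_def by (rule fc_inner)
  have g_sym: "\<And>(a::real vec) (b::real vec). a \<in> carrier_vec m \<Longrightarrow> b \<in> carrier_vec m \<Longrightarrow> g a b = g b a"
    by (metis g_inner inner_commute)
  have g_pos: "\<And>(a::real vec). a \<in> carrier_vec m \<Longrightarrow> a \<noteq> 0\<^sub>v m \<Longrightarrow> g a a > 0"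
    unfolding g_def G\<^sub>\<Phi>_def by (rule fc_pos[OF indep_\<Phi>])
  have Phi_inj: "\<And>(a::real vec). a \<in> carrier_vec m \<Longrightarrow> \<Phi> a = 0 \<Longrightarrow> a = 0\<^sub>v m"
    unfolding \<Phi>_def by (rule fc_inj[OF indep_\<Phi>])
  have selfadj: "\<And>(a::real vec) (b::real vec). a \<in> carrier_vec m \<Longrightarrow> b \<in> carrier_vec m \<Longrightarrow> g (T *\<^sub>v a) b = g a (T *\<^sub>v b)"
  proof -
    fix a b :: "real vec" assume a: "a \<in> carrier_vec m" and b: "b \<in> carrier_vec m"
    have Ta: "T *\<^sub>v a \<in> carrier_vec m" using Tc a by auto
    show "g (T *\<^sub>v a) b = g a (T *\<^sub>v b)"
      using g_sym[OF Ta b] K1[OF b a] K1[OF a b] inner_commute by metis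
  qed
  have g_smult_r: "\<And>(a::real vec) (b::real vec) c. b \<in> carrier_vec m \<Longrightarrow> g a (c \<cdot>\<^sub>v b) = c * g a b"
    unfolding g_def scalar_prod_def using G by (simp add: mult_mat_vec[OF G] sum_distrib_left mult.left_commute)
  have g_smult_l: "\<And>(a::real vec) (b::real vec) c. a \<in> carrier_vec m \<Longrightarrow> g (c \<cdot>\<^sub>v a) b = c * g a b"
    unfolding g_def using G by simp
  have lam_pos: "\<And>i. i < r \<Longrightarrow> lam i > 0"
  proof -
    fix i assume i: "i < r"
    have "0 \<le> inner (S (\<Phi> (w i))) (S (\<Phi> (w i)))" by simp
    also have "\<dots> = lam i * g (w i) (w i)" unfolding K1[OF wc[OF i] wc[OF i]] Tw[OF i]
      by (rule g_smult_r[OF wc[OF i]])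
    finally have "0 \<le> lam i * g (w i) (w i)" .
    with g_pos[OF wc[OF i] wnz[OF i]] lam_nonzero[OF i] show "lam i > 0"
      by (simp add: zero_le_mult_iff)
  qed
  have sv_in: "\<And>\<mu> a. \<mu> \<ge> 0 \<Longrightarrow> a \<in> carrier_vec m \<Longrightarrow> T *\<^sub>v a = \<mu> \<cdot>\<^sub>v a \<Longrightarrow>
      \<Phi> a \<in> sv_space S (sqrt \<mu>)"
  proof -
    fix \<mu> :: real and a :: "real vec" assume mu: "\<mu> \<ge> 0" and a: "a \<in> carrier_vec m"
      and Ta: "T *\<^sub>v a = \<mu> \<cdot>\<^sub>v a"
    show "\<Phi> a \<in> sv_space S (sqrt \<mu>)" unfolding sv_space_def
    proof (intro CollectI allI)
      fix h
      have "inner (S h) (S (\<Phi> a)) = cv \<phi> x m h \<bullet> (\<mu> \<cdot>\<^sub>v a)" unfolding K3[OF a] Ta ..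
      also have "\<dots> = \<mu> * (cv \<phi> x m h \<bullet> a)" using a by simp
      also have "cv \<phi> x m h \<bullet> a = inner h (\<Phi> a)" unfolding \<Phi>_def fc_inner_h2[OF a]
        by (rule comm_scalar_prod[of _ m], insert a, auto)
      finally show "inner (S h) (S (\<Phi> a)) = (sqrt \<mu>)\<^sup>2 * inner h (\<Phi> a)" using mu by simp
    qed
  qed
  have eigE: "\<And>\<mu> a b. \<mu> > 0 \<Longrightarrow> a \<in> carrier_vec m \<Longrightarrow> b \<in> carrier_vec m \<Longrightarrow>
      T *\<^sub>v a = \<mu> \<cdot>\<^sub>v a \<Longrightarrow> T *\<^sub>v b = \<mu> \<cdot>\<^sub>v b \<Longrightarrow> b \<noteq> 0\<^sub>v m \<Longrightarrow> \<exists>c. a = c \<cdot>\<^sub>v b"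
  proof -
    fix \<mu> :: real and a b :: "real vec" assume mu: "\<mu> > 0" and a: "a \<in> carrier_vec m"
      and b: "b \<in> carrier_vec m" and Ta: "T *\<^sub>v a = \<mu> \<cdot>\<^sub>v a" and Tb: "T *\<^sub>v b = \<mu> \<cdot>\<^sub>v b"
      and bnz: "b \<noteq> 0\<^sub>v m"
    define V where "V = sv_space S (sqrt \<mu>)"
    have aV: "\<Phi> a \<in> V" unfolding V_def by (rule sv_in, insert mu a Ta, auto)
    have bV: "\<Phi> b \<in> V" unfolding V_def by (rule sv_in, insert mu b Tb, auto)
    have Pb: "\<Phi> b \<noteq> 0" using Phi_inj[OF b] bnz by blast
    have "singular_value S (sqrt \<mu>)" unfolding singular_value_def
      using mu bV Pb unfolding V_def by auto
    from mult1[OF this] have d1: "sv_multiplicity S (sqrt \<mu>) = 1" .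
    obtain B0 where B0: "B0 \<subseteq> V" "V \<subseteq> real_vector.span B0" "card B0 = 1"
      using real_vector.basis_exists[of V] d1 unfolding sv_multiplicity_def V_def by metis
    then obtain e where e: "B0 = {e}" by (meson card_1_singletonE)
    from aV bV B0(2) obtain s t where s: "\<Phi> a = s *\<^sub>R e" and t: "\<Phi> b = t *\<^sub>R e"
      unfolding e real_vector.span_singleton by blast
    have t0: "t \<noteq> 0" using Pb t by auto
    define c where "c = s / t"
    have "\<Phi> a = \<Phi> (c \<cdot>\<^sub>v b)" unfolding \<Phi>_def fc_smult[OF b] unfolding \<Phi>_def[symmetric] s t c_def
      using t0 by simp
    hence "\<Phi> (a - c \<cdot>\<^sub>v b) = 0" unfolding \<Phi>_def using a b by (simp add: fc_diff)
    from Phi_inj[OF _ this] a b have "a - c \<cdot>\<^sub>v b = 0\<^sub>v m" by simp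
    hence "a = c \<cdot>\<^sub>v b" using a b
      by (metis carrier_vecD eq_vecI index_minus_vec(1) index_smult_vec(1) index_zero_vec(1)
        right_minus_eq smult_carrier_vec)
    thus "\<exists>c. a = c \<cdot>\<^sub>v b" by blast
  qed
  define es where "es = replicate (m - r) (0::real) @ map lam [0..<r]"
  have cpT: "char_poly T = (\<Prod>a\<leftarrow>es. [:- a, 1:])"
  proof -
    have "(\<Prod>a\<leftarrow>es. [:- a, 1:]) = [:0,1:] ^ (m - r) * (\<Prod>i\<leftarrow>[0..<r]. [:- lam i, 1:])"
      unfolding es_def by (simp add: prod_list_replicate o_def)
    also have "(\<Prod>i\<leftarrow>[0..<r]. [:- lam i, 1:]) = (\<Prod>i<r. [:- lam i, 1:])"
      by (subst prod.distinct_set_conv_list[symmetric], auto simp: atLeast0LessThan)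
    finally show ?thesis unfolding T_def lam_eigs by (simp add: monom_altdef)
  qed
  obtain n_as where jnf: "jordan_nf T n_as" using jordan_nf_exists[OF Tc cpT] by blast
  have ker2: "\<And>ev. mat_kernel (char_matrix T ev ^\<^sub>m 2) = mat_kernel (char_matrix T ev ^\<^sub>m 1)"
  proof -
    fix ev :: real
    define C where "C = char_matrix T ev"
    have Cc: "C \<in> carrier_mat m m" unfolding C_def using Tc by simp
    have Cv: "\<And>a. a \<in> carrier_vec m \<Longrightarrow> C *\<^sub>v a = T *\<^sub>v a - ev \<cdot>\<^sub>v a"
      unfolding C_def char_matrix_def using Tc
      by (intro eq_vecI, auto simp: add_mult_distrib_mat_vec)
    have Cadj: "\<And>a b. a \<in> carrier_vec m \<Longrightarrow> b \<in> carrier_vec m \<Longrightarrow> g (C *\<^sub>v a) b = g a (C *\<^sub>v b)"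
    proof -
      fix a b :: "real vec" assume a: "a \<in> carrier_vec m" and b: "b \<in> carrier_vec m"
      have Ta: "T *\<^sub>v a \<in> carrier_vec m" and Tb: "T *\<^sub>v b \<in> carrier_vec m" using Tc a b by auto
      have Gb: "G\<^sub>\<Phi> *\<^sub>v b \<in> carrier_vec m" using G b by auto
      have "g (C *\<^sub>v a) b = (T *\<^sub>v a) \<bullet> (G\<^sub>\<Phi> *\<^sub>v b) - (ev \<cdot>\<^sub>v a) \<bullet> (G\<^sub>\<Phi> *\<^sub>v b)"
        unfolding g_def Cv[OF a] by (rule minus_scalar_prod_distrib[of _ m], insert Ta a Gb, auto)
      also have "\<dots> = g (T *\<^sub>v a) b - ev * g a b" unfolding g_def using a Gb by simp
      also have "\<dots> = g a (T *\<^sub>v b) - ev * g a b" using selfadj[OF a b] by simp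
      also have "\<dots> = a \<bullet> (G\<^sub>\<Phi> *\<^sub>v (T *\<^sub>v b)) - a \<bullet> (G\<^sub>\<Phi> *\<^sub>v (ev \<cdot>\<^sub>v b))"
        using g_smult_r[OF b, of a ev] unfolding g_def by simp
      also have "\<dots> = a \<bullet> (G\<^sub>\<Phi> *\<^sub>v (T *\<^sub>v b) - G\<^sub>\<Phi> *\<^sub>v (ev \<cdot>\<^sub>v b))"
        by (rule scalar_prod_minus_distrib[of _ m, symmetric], insert a b Tb G, auto)
      also have "G\<^sub>\<Phi> *\<^sub>v (T *\<^sub>v b) - G\<^sub>\<Phi> *\<^sub>v (ev \<cdot>\<^sub>v b) = G\<^sub>\<Phi> *\<^sub>v (C *\<^sub>v b)"
        unfolding Cv[OF b] by (rule mult_minus_distrib_mat_vec[OF G, symmetric], insert Tb b, auto)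
      finally show "g (C *\<^sub>v a) b = g a (C *\<^sub>v b)" unfolding g_def .
    qed
    have C2: "C ^\<^sub>m 2 = C * C" "C ^\<^sub>m 1 = C" using Cc by (simp_all add: numeral_2_eq_2)
    show "mat_kernel (char_matrix T ev ^\<^sub>m 2) = mat_kernel (char_matrix T ev ^\<^sub>m 1)"
      unfolding C_def[symmetric] C2
    proof
      show "mat_kernel C \<subseteq> mat_kernel (C * C)" by (rule mat_kernel_mult_subset[OF Cc Cc])
      show "mat_kernel (C * C) \<subseteq> mat_kernel C"
      proof
        fix a assume "a \<in> mat_kernel (C * C)"
        hence a: "a \<in> carrier_vec m" and "(C * C) *\<^sub>v a = 0\<^sub>v m"
          using mat_kernelD[of "C * C" m m a] Cc by auto
        hence CCa: "C *\<^sub>v (C *\<^sub>v a) = 0\<^sub>v m" using Cc by auto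
        define b where "b = C *\<^sub>v a"
        have b: "b \<in> carrier_vec m" unfolding b_def using Cc a by auto
        have "g b b = g a (C *\<^sub>v b)" unfolding b_def by (rule Cadj[OF a], insert Cc a, auto)
        also have "\<dots> = 0"
        proof -
          have "G\<^sub>\<Phi> *\<^sub>v 0\<^sub>v m = 0\<^sub>v m" using G by auto
          thus ?thesis unfolding b_def CCa g_def using a by simp
        qed
        finally have "b = 0\<^sub>v m" using g_pos[OF b] by fastforce
        thus "a \<in> mat_kernel C" unfolding b_def by (intro mat_kernelI[OF Cc a])
      qed
    qed
  qed
  have ones: "\<forall>p\<in>set n_as. fst p = 1"
  proof
    fix p assume p: "p \<in> set n_as"
    obtain k ev where pk: "p = (k, ev)" by force
    have "dim_gen_eigenspace T ev 2 = dim_gen_eigenspace T ev 1"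
      unfolding dim_gen_eigenspace_def kernel_dim_def ker2 using Tc by simp
    hence "\<forall>n\<in>set (map fst [(n, e)\<leftarrow>n_as . e = ev]). n \<le> 1"
      unfolding dim_gen_eigenspace[OF jnf] by (intro sum_min_eq)
    hence "k \<le> 1" using p pk by force
    moreover have "k \<noteq> 0" using jnf p pk unfolding jordan_nf_def by force
    ultimately show "fst p = 1" using pk by simp
  qed
  define J where "J = jordan_matrix n_as"
  obtain P Q where wit: "similar_mat_wit T J P Q"
    using jnf unfolding jordan_nf_def similar_mat_def J_def by blast
  have Pc: "P \<in> carrier_mat m m" and Qc: "Q \<in> carrier_mat m m" and Jc: "J \<in> carrier_mat m m"
    and PQ: "P * Q = 1\<^sub>m m" and QP: "Q * P = 1\<^sub>m m" and TPJQ: "T = P * J * Q"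
    using wit Tc unfolding similar_mat_wit_def Let_def by auto
  have len: "length n_as = m"
    using Jc unfolding J_def jm_diag[OF ones] by auto
  define d where "d = (\<lambda>k. snd (n_as ! k))"
  have Jeq: "J = mat m m (\<lambda>(i,j). if i = j then d i else 0)"
    unfolding J_def jm_diag[OF ones] len d_def ..
  have TP: "T * P = P * J"
  proof -
    have "T * P = P * J * (Q * P)" unfolding TPJQ using Pc Qc Jc by (simp add: assoc_mult_mat[of _ m m _ m _ m])
    also have "\<dots> = P * J" unfolding QP using Pc Jc by simp
    finally show ?thesis .
  qed
  have colc: "\<And>k. col P k \<in> carrier_vec m" by (rule carrier_vecI, insert Pc, auto)
  have col_eig: "\<And>k. k < m \<Longrightarrow> T *\<^sub>v col P k = d k \<cdot>\<^sub>v col P k"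
  proof -
    fix k assume k: "k < m"
    have "T *\<^sub>v col P k = col (T * P) k" by (rule col_mult2[OF Tc Pc k, symmetric])
    also have "\<dots> = col (P * J) k" unfolding TP ..
    also have "\<dots> = d k \<cdot>\<^sub>v col P k"
    proof (rule eq_vecI)
      show "dim_vec (col (P * J) k) = dim_vec (d k \<cdot>\<^sub>v col P k)" using Pc Jc by simp
      fix i assume "i < dim_vec (d k \<cdot>\<^sub>v col P k)"
      hence i: "i < m" using Pc by simp
      have "col (P * J) k $ i = row P i \<bullet> col J k" using i k Pc Jc by simp
      also have "\<dots> = (\<Sum>j\<in>{0..<m}. P $$ (i,j) * J $$ (j,k))"
        unfolding scalar_prod_def using i k Pc Jc by (intro sum.cong, auto)
      also have "\<dots> = (\<Sum>j\<in>{0..<m}. if j = k then P $$ (i,k) * d k else 0)"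
        by (rule sum.cong[OF refl], unfold Jeq, insert k, auto)
      also have "\<dots> = P $$ (i,k) * d k" using k by simp
      finally show "col (P * J) k $ i = (d k \<cdot>\<^sub>v col P k) $ i" using i k Pc by simp
    qed
    finally show "T *\<^sub>v col P k = d k \<cdot>\<^sub>v col P k" .
  qed
  have QPidx: "\<And>i j. i < m \<Longrightarrow> j < m \<Longrightarrow> row Q i \<bullet> col P j = (if i = j then 1 else 0)"
  proof -
    fix i j assume "i < m" "j < m"
    thus "row Q i \<bullet> col P j = (if i = j then 1 else 0)"
      using QP Qc Pc index_mult_mat(1)[of i Q j P] by simp
  qed
  have colnz: "\<And>k. k < m \<Longrightarrow> col P k \<noteq> 0\<^sub>v m"
  proof
    fix k assume k: "k < m" and z: "col P k = 0\<^sub>v m"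
    have "row Q k \<bullet> col P k = 1" using QPidx[OF k k] by simp
    moreover have "row Q k \<bullet> col P k = 0" unfolding z using Qc k by simp
    ultimately show False by simp
  qed
  have colnp: "\<And>k1 k2 c. k1 < m \<Longrightarrow> k2 < m \<Longrightarrow> k1 \<noteq> k2 \<Longrightarrow> col P k1 \<noteq> c \<cdot>\<^sub>v col P k2"
  proof
    fix k1 k2 c assume k: "k1 < m" "k2 < m" "k1 \<noteq> k2" and eq: "col P k1 = c \<cdot>\<^sub>v col P k2"
    have "0 = row Q k2 \<bullet> col P k1" using QPidx k by simp
    also have "\<dots> = c * (row Q k2 \<bullet> col P k2)" unfolding eq using Qc Pc k by simp
    also have "\<dots> = c" using QPidx k by simp
    finally have "c = 0" by simp
    hence "col P k1 = 0\<^sub>v m" unfolding eq using Pc by auto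
    with colnz k show False by blast
  qed
  have cp_nz: "char_poly T \<noteq> 0" using degree_monic_char_poly[OF Tc] by auto
  have distinct: "\<And>i j. i < r \<Longrightarrow> j < r \<Longrightarrow> i \<noteq> j \<Longrightarrow> lam i \<noteq> lam j"
  proof
    fix i j assume i: "i < r" and j: "j < r" and ij: "i \<noteq> j" and eq: "lam i = lam j"
    define f where "f = (\<lambda>i. [:- lam i, 1:])"
    have "(\<Prod>i<r. f i) = f i * (\<Prod>k\<in>{..<r} - {i}. f k)"
      using i by (simp add: prod.remove)
    also have "(\<Prod>k\<in>{..<r} - {i}. f k) = f j * (\<Prod>k\<in>{..<r} - {i} - {j}. f k)"
      using i j ij by (subst prod.remove[of _ j], auto)
    finally have "f i * f j dvd (\<Prod>i<r. f i)" by simp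
    hence "[:- lam i, 1:] ^ 2 dvd char_poly T"
      unfolding T_def lam_eigs f_def eq by (simp add: power2_eq_square dvd_mult)
    from order_max[OF this cp_nz]
    have "2 \<le> Polynomial.order (lam i) (char_poly T)" .
    also have "\<dots> = card {k. k < length n_as \<and> snd (n_as ! k) = lam i}"
      unfolding jordan_nf_order[OF jnf] sum_fst_filter_ones[OF ones] length_filter_conv_card ..
    finally obtain k1 k2 where k1: "k1 < m" "d k1 = lam i" and k2: "k2 < m" "d k2 = lam i" and kk: "k1 \<noteq> k2"
      using len unfolding d_def by (auto elim: card2_obtain)
    from eigE[OF lam_pos[OF i] colc colc, of k1 k2] col_eig[OF k1(1)] col_eig[OF k2(1)] k1 k2 colnz[OF k2(1)]
    obtain c where "col P k1 = c \<cdot>\<^sub>v col P k2" by auto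
    with colnp[OF k1(1) k2(1) kk] show False by blast
  qed
  have roots: "\<And>k. k < m \<Longrightarrow> d k \<noteq> 0 \<Longrightarrow> \<exists>i<r. d k = lam i"
  proof -
    fix k assume k: "k < m" and dk: "d k \<noteq> 0"
    have "n_as ! k \<in> set n_as" using k len by simp
    moreover hence "n_as ! k = (1, d k)" using ones unfolding d_def by (metis prod.collapse)
    ultimately have "(1, d k) \<in> set n_as" by simp
    from jordan_nf_block_size_order_bound[OF jnf this]
    have "poly (char_poly T) (d k) = 0" using order_root by fastforce
    hence "d k ^ (m - r) * (\<Prod>i<r. d k - lam i) = 0"
      unfolding T_def lam_eigs by (simp add: poly_monom poly_prod)
    with dk show "\<exists>i<r. d k = lam i" by auto
  qed
  define nn where "nn = (\<lambda>i. g (w i) (w i))"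
  have nn_pos: "\<And>i. i < r \<Longrightarrow> nn i > 0" unfolding nn_def using g_pos wc wnz by blast
  have v_eq: "\<And>i. v i = (1 / sqrt (nn i)) *\<^sub>R \<Phi> (w i)"
    unfolding v_def nn_def g_def \<Phi>_def ..
  have g_orth: "\<And>i j. i < r \<Longrightarrow> j < r \<Longrightarrow> g (w i) (w j) = (if i = j then nn i else 0)"
  proof -
    fix i j assume i: "i < r" and j: "j < r"
    show "g (w i) (w j) = (if i = j then nn i else 0)"
    proof (cases "i = j")
      case False
      have "lam i * g (w i) (w j) = g (T *\<^sub>v w i) (w j)" unfolding Tw[OF i] g_smult_l[OF wc[OF i]] ..
      also have "\<dots> = g (w i) (T *\<^sub>v w j)" by (rule selfadj[OF wc[OF i] wc[OF j]])
      also have "\<dots> = lam j * g (w i) (w j)" unfolding Tw[OF j] g_smult_r[OF wc[OF j]] ..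
      finally have "(lam i - lam j) * g (w i) (w j) = 0" by (simp add: algebra_simps)
      with distinct[OF i j False] False show ?thesis by simp
    qed (simp add: nn_def)
  qed
  have v_orth: "\<forall>i<r. \<forall>j<r. inner (v i) (v j) = (if i = j then 1 else 0)"
  proof (intro allI impI)
    fix i j assume i: "i < r" and j: "j < r"
    have "inner (v i) (v j) = (1 / sqrt (nn i)) * (1 / sqrt (nn j)) * g (w i) (w j)"
      unfolding v_eq g_inner[OF wc[OF i] wc[OF j], symmetric] by simp
    also have "\<dots> = (if i = j then 1 else 0)" unfolding g_orth[OF i j]
      using nn_pos[OF i] by (cases "i = j") (auto simp: real_sqrt_mult[symmetric])
    finally show "inner (v i) (v j) = (if i = j then 1 else 0)" .
  qed
  have Sv: "\<And>i. S (v i) = (1 / sqrt (nn i)) *\<^sub>R S (\<Phi> (w i))"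
    unfolding v_eq S_def by (rule opS_scale)
  have u_orth: "\<forall>i<r. \<forall>j<r. inner (u i) (u j) = (if i = j then 1 else 0)"
  proof (intro allI impI)
    fix i j assume i: "i < r" and j: "j < r"
    have "inner (u i) (u j) = (1 / sqrt (lam i)) * (1 / sqrt (lam j)) * (1 / sqrt (nn i)) * (1 / sqrt (nn j))
       * inner (S (\<Phi> (w i))) (S (\<Phi> (w j)))"
      unfolding u_def Sv by simp
    also have "inner (S (\<Phi> (w i))) (S (\<Phi> (w j))) = lam j * g (w i) (w j)"
      unfolding K1[OF wc[OF i] wc[OF j]] Tw[OF j] g_smult_r[OF wc[OF j]] ..
    also have "(1 / sqrt (lam i)) * (1 / sqrt (lam j)) * (1 / sqrt (nn i)) * (1 / sqrt (nn j)) * (lam j * g (w i) (w j))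
       = (if i = j then 1 else 0)" unfolding g_orth[OF i j]
      using nn_pos[OF i] lam_pos[OF i] by (cases "i = j") (auto simp: real_sqrt_mult[symmetric])
    finally show "inner (u i) (u j) = (if i = j then 1 else 0)" .
  qed
  define \<kappa> where "\<kappa> = (\<lambda>j. (\<Sum>i'<n. B $$ (i',j) *\<^sub>R \<psi> (y i')) - (\<Sum>i<r. (w i $ j / nn i) *\<^sub>R S (\<Phi> (w i))))"
  define D where "D = (\<lambda>c. \<Psi> (B *\<^sub>v c) - (\<Sum>i<r. ((w i \<bullet> c) / nn i) *\<^sub>R S (\<Phi> (w i))))"
  have DK: "\<And>c. c \<in> carrier_vec m \<Longrightarrow> D c = (\<Sum>j<m. c $ j *\<^sub>R \<kappa> j)"
  proof -
    fix c :: "real vec" assume c: "c \<in> carrier_vec m"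
    have 1: "\<Psi> (B *\<^sub>v c) = (\<Sum>j<m. c $ j *\<^sub>R (\<Sum>i'<n. B $$ (i',j) *\<^sub>R \<psi> (y i')))"
      unfolding \<Psi>_def feat_comb_def using B_dim c
      by (simp add: mv_index[OF B_dim c] scaleR_sum_left scaleR_sum_right sum.swap[of _ "{..<m}"]
          del: index_mult_mat_vec) (intro sum.cong refl, simp add: mult.commute)
    have 2: "(\<Sum>i<r. ((w i \<bullet> c) / nn i) *\<^sub>R S (\<Phi> (w i))) =
        (\<Sum>j<m. c $ j *\<^sub>R (\<Sum>i<r. (w i $ j / nn i) *\<^sub>R S (\<Phi> (w i))))"
      using c by (simp add: sp_sum scaleR_sum_left scaleR_sum_right sum_divide_distrib sum.swap[of _ "{..<m}"]
          mult.commute)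
    show "D c = (\<Sum>j<m. c $ j *\<^sub>R \<kappa> j)"
      unfolding D_def 1 2 \<kappa>_def by (simp add: scaleR_diff_right sum_subtractf)
  qed
  have DP: "\<And>k. k < m \<Longrightarrow> D (G\<^sub>\<Phi> *\<^sub>v col P k) = 0"
  proof -
    fix k assume k: "k < m"
    define p where "p = col P k"
    have p: "p \<in> carrier_vec m" unfolding p_def by (rule colc)
    have Tp: "T *\<^sub>v p = d k \<cdot>\<^sub>v p" unfolding p_def by (rule col_eig[OF k])
    have Dp: "D (G\<^sub>\<Phi> *\<^sub>v p) = S (\<Phi> p) - (\<Sum>i<r. (g (w i) p / nn i) *\<^sub>R S (\<Phi> (w i)))"
      using S_fc[OF p] by (simp add: D_def g_def)
    show "D (G\<^sub>\<Phi> *\<^sub>v col P k) = 0"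
    proof (cases "d k = 0")
      case True
      have "inner (S (\<Phi> p)) (S (\<Phi> p)) = g p (T *\<^sub>v p)" by (rule K1[OF p p])
      also have "\<dots> = 0" unfolding Tp True g_smult_r[OF p] by simp
      finally have S0: "S (\<Phi> p) = 0" by simp
      have g0: "\<And>i. i < r \<Longrightarrow> g (w i) p = 0"
      proof -
        fix i assume i: "i < r"
        have "lam i * g (w i) p = g (T *\<^sub>v w i) p" unfolding Tw[OF i] g_smult_l[OF wc[OF i]] ..
        also have "\<dots> = g (w i) (T *\<^sub>v p)" by (rule selfadj[OF wc[OF i] p])
        also have "\<dots> = 0" unfolding Tp True g_smult_r[OF p] by simp
        finally show "g (w i) p = 0" using lam_nonzero[OF i] by simp
      qed
      show ?thesis unfolding p_def[symmetric] Dp S0 using g0 by simp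
    next
      case False
      from roots[OF k False] obtain i0 where i0: "i0 < r" "d k = lam i0" by blast
      from eigE[OF lam_pos[OF i0(1)] p wc[OF i0(1)] Tp[unfolded i0(2)] Tw[OF i0(1)] wnz[OF i0(1)]]
      obtain c where pc: "p = c \<cdot>\<^sub>v w i0" by blast
      have "(\<Sum>i<r. (g (w i) p / nn i) *\<^sub>R S (\<Phi> (w i))) =
            (\<Sum>i<r. if i = i0 then c *\<^sub>R S (\<Phi> (w i0)) else 0)"
      proof (rule sum.cong[OF refl])
        fix i assume "i \<in> {..<r}"
        hence i: "i < r" by simp
        have "g (w i) p = c * (if i = i0 then nn i else 0)"
          unfolding pc g_smult_r[OF wc[OF i0(1)]] g_orth[OF i i0(1)] ..
        thus "(g (w i) p / nn i) *\<^sub>R S (\<Phi> (w i)) = (if i = i0 then c *\<^sub>R S (\<Phi> (w i0)) else 0)"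
          using nn_pos[OF i] by auto
      qed
      also have "\<dots> = c *\<^sub>R S (\<Phi> (w i0))" using i0 by simp
      also have "\<dots> = S (\<Phi> p)" unfolding pc \<Phi>_def fc_smult[OF wc[OF i0(1)]] S_def opS_scale ..
      finally show ?thesis unfolding p_def[symmetric] Dp by simp
    qed
  qed
  have kappa0: "\<And>j. j < m \<Longrightarrow> \<kappa> j = 0"
  proof -
    fix j0 assume j0: "j0 < m"
    define t where "t = vec m (\<lambda>j. inner (\<kappa> j) (\<kappa> j0))"
    have t: "t \<in> carrier_vec m" unfolding t_def by simp
    define s where "s = G\<^sub>\<Phi> *\<^sub>v t"
    have s: "s \<in> carrier_vec m" unfolding s_def using G t by simp
    have ps: "\<And>k. k < m \<Longrightarrow> col P k \<bullet> s = 0"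
    proof -
      fix k assume k: "k < m"
      have Gp: "G\<^sub>\<Phi> *\<^sub>v col P k \<in> carrier_vec m" using G colc by simp
      have "col P k \<bullet> s = (G\<^sub>\<Phi> *\<^sub>v col P k) \<bullet> t" unfolding s_def G\<^sub>\<Phi>_def
        by (rule gram_left[symmetric], insert colc t, auto)
      also have "\<dots> = (\<Sum>j<m. (G\<^sub>\<Phi> *\<^sub>v col P k) $ j * inner (\<kappa> j) (\<kappa> j0))"
        unfolding t_def by (simp add: sp_sum)
      also have "\<dots> = inner (\<Sum>j<m. (G\<^sub>\<Phi> *\<^sub>v col P k) $ j *\<^sub>R \<kappa> j) (\<kappa> j0)"
        by (simp add: inner_sum_left)
      also have "(\<Sum>j<m. (G\<^sub>\<Phi> *\<^sub>v col P k) $ j *\<^sub>R \<kappa> j) = 0"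
        using DK[OF Gp] DP[OF k] by simp
      finally show "col P k \<bullet> s = 0" by simp
    qed
    have Pts: "transpose_mat P *\<^sub>v s = 0\<^sub>v m"
      by (rule eq_vecI, insert Pc ps, auto)
    have "s = 1\<^sub>m m *\<^sub>v s" using s by simp
    also have "1\<^sub>m m = transpose_mat Q * transpose_mat P"
      using transpose_mult[OF Pc Qc] PQ by simp
    also have "(transpose_mat Q * transpose_mat P) *\<^sub>v s = transpose_mat Q *\<^sub>v (transpose_mat P *\<^sub>v s)"
      using Pc Qc s by simp
    also have "\<dots> = 0\<^sub>v m" unfolding Pts using Qc by auto
    finally have s0: "s = 0\<^sub>v m" .
    have "g t t = 0" unfolding g_def s_def[symmetric] s0 using t by simp
    hence "t = 0\<^sub>v m" using g_pos[OF t] by fastforce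
    hence "t $ j0 = 0" using j0 by simp
    hence "inner (\<kappa> j0) (\<kappa> j0) = 0" unfolding t_def using j0 by simp
    thus "\<kappa> j0 = 0" by simp
  qed
  have D0: "\<And>c. c \<in> carrier_vec m \<Longrightarrow> D c = 0"
    using DK kappa0 by simp
  have decomp: "S = (\<lambda>h. \<Sum>i<r. sqrt (lam i) *\<^sub>R tensor_op (u i) (v i) h)"
  proof
    fix h
    have "(\<Sum>i<r. sqrt (lam i) *\<^sub>R tensor_op (u i) (v i) h) =
          (\<Sum>i<r. ((w i \<bullet> cv \<phi> x m h) / nn i) *\<^sub>R S (\<Phi> (w i)))"
    proof (rule sum.cong[OF refl])
      fix i assume "i \<in> {..<r}"
      hence i: "i < r" by simp
      have "inner (v i) h = (1 / sqrt (nn i)) * (w i \<bullet> cv \<phi> x m h)"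
        unfolding v_eq \<Phi>_def by (simp add: fc_inner_h[OF wc[OF i]])
      note ih = this
      have co: "sqrt (lam i) * ((1 / sqrt (nn i)) * (w i \<bullet> cv \<phi> x m h)) * (1 / sqrt (lam i)) * (1 / sqrt (nn i))
          = (w i \<bullet> cv \<phi> x m h) / nn i"
        using lam_pos[OF i] nn_pos[OF i] by (simp add: field_simps)
      show "sqrt (lam i) *\<^sub>R tensor_op (u i) (v i) h = ((w i \<bullet> cv \<phi> x m h) / nn i) *\<^sub>R S (\<Phi> (w i))"
        unfolding tensor_op_def u_def Sv ih scaleR_scaleR co[symmetric] by (simp add: ac_simps)
    qed
    also have "\<dots> = S h" using D0[of "cv \<phi> x m h"] unfolding D_def S_eq[of h] by simp
    finally show "S h = (\<Sum>i<r. sqrt (lam i) *\<^sub>R tensor_op (u i) (v i) h)" by simp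
  qed
  show ?thesis using lam_pos u_orth v_orth decomp by blast
qed

end
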